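(* Let $\kappa>0$, $D_\kappa=\pi/\sqrt\kappa$, let $X$ be a complete CAT($\kappa$) space such that $d(v,v')<D_\kappa/2$ for all $v,v'\in X$, and let $T\colon X\to X$ be firmly $\kappa$-vicinal. If $\mathrm{Fix}(T)$ is nonempty, then for each $x\in X$, $\{T^nx\}$ is $\Delta$-convergent to an element of $\mathrm{Fix}(T)$.
   Context: A CAT($\kappa$) space ($\kappa>0$) is a $D_\kappa$-geodesic metric space in which every geodesic triangle of perimeter $<2D_\kappa$ satisfies the comparison inequality $d(p,q)\le\rho_\kappa(\bar p,\bar q)$ relative to comparison triangles in $M_\kappa=(\mathbb S^2,\rho_{\mathbb S^2}/\sqrt\kappa)$. $\{x_n\}$ is $\Delta$-convergent to $p$ if for every subsequence $\{x_{n_i}\}$, $p$ is the unique minimizer of $z\mapsto\limsup_i d(x_{n_i},z)$. With $\tilde C_z=\cos\sqrt\kappa\, d(Tz,z)$, $T$ is firmly $\kappa$-vicinal if for all $x,y\in X$: $\bigl(\tilde C_x^2(1+\tilde C_y^2)\tilde C_y+\tilde C_y^2(1+\tilde C_x^2)\tilde C_x\bigr)\cos\sqrt\kappa d(Tx,Ty)\ge\tilde C_x^2(1+\tilde C_y^2)\cos\sqrt\kappa d(Tx,y)+\tilde C_y^2(1+\tilde C_x^2)\cos\sqrt\kappa d(Ty,x)$. *)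

theory Defs
  imports "HOL-Analysis.Analysis"
begin

definition Dk :: "real \<Rightarrow> real" where
  "Dk \<kappa> = pi / sqrt \<kappa>"

definition is_geodesic ::
  "('a \<Rightarrow> 'a \<Rightarrow> real) \<Rightarrow> 'a set \<Rightarrow> (real \<Rightarrow> 'a) \<Rightarrow> 'a \<Rightarrow> 'a \<Rightarrow> bool" where
  "is_geodesic d S \<gamma> x y \<longleftrightarrow>
     \<gamma> 0 = x \<and> \<gamma> (d x y) = y \<and> (\<forall>t\<in>{0..d x y}. \<gamma> t \<in> S) \<and>
     (\<forall>s\<in>{0..d x y}. \<forall>t\<in>{0..d x y}. d (\<gamma> s) (\<gamma> t) = \<bar>s - t\<bar>)"

definition D_geodesic :: "real \<Rightarrow> 'a::metric_space set \<Rightarrow> bool" where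
  "D_geodesic D S \<longleftrightarrow>
     (\<forall>x\<in>S. \<forall>y\<in>S. dist x y < D \<longrightarrow> (\<exists>\<gamma>. is_geodesic dist S \<gamma> x y))"

text \<open>Model space M_kappa: the unit sphere in R^3 with the metric arccos(u.v)/sqrt kappa.\<close>
definition S2 :: "(real^3) set" where
  "S2 = {u. norm u = 1}"

definition rho :: "real \<Rightarrow> real^3 \<Rightarrow> real^3 \<Rightarrow> real" where
  "rho \<kappa> u v = arccos (u \<bullet> v) / sqrt \<kappa>"

text \<open>A side of the triangle is given by a geodesic
  gamma_i, the corresponding side of the comparison triangle by a geodesic delta_i in
  M_kappa; the point gamma_i t corresponds to delta_i t.\<close>
definition CAT :: "real \<Rightarrow> 'a::metric_space set \<Rightarrow> bool" where
  "CAT \<kappa> S \<longleftrightarrow> \<kappa> > 0 \<and> D_geodesic (Dk \<kappa>) S \<and>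
    (\<forall>p\<in>S. \<forall>q\<in>S. \<forall>r\<in>S. \<forall>\<gamma>1 \<gamma>2 \<gamma>3 p' q' r' \<delta>1 \<delta>2 \<delta>3.
       dist p q + dist q r + dist r p < 2 * Dk \<kappa> \<and>
       is_geodesic dist S \<gamma>1 p q \<and> is_geodesic dist S \<gamma>2 q r \<and> is_geodesic dist S \<gamma>3 r p \<and>
       p' \<in> S2 \<and> q' \<in> S2 \<and> r' \<in> S2 \<and>
       rho \<kappa> p' q' = dist p q \<and> rho \<kappa> q' r' = dist q r \<and> rho \<kappa> r' p' = dist r p \<and>
       is_geodesic (rho \<kappa>) S2 \<delta>1 p' q' \<and> is_geodesic (rho \<kappa>) S2 \<delta>2 q' r' \<and>
       is_geodesic (rho \<kappa>) S2 \<delta>3 r' p' \<longrightarrow>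
       (let P = (\<lambda>t. (\<gamma>1 t, \<delta>1 t)) ` {0..dist p q} \<union>
                (\<lambda>t. (\<gamma>2 t, \<delta>2 t)) ` {0..dist q r} \<union>
                (\<lambda>t. (\<gamma>3 t, \<delta>3 t)) ` {0..dist r p}
        in \<forall>(x, x')\<in>P. \<forall>(y, y')\<in>P. dist x y \<le> rho \<kappa> x' y'))"

definition firmly_vicinal :: "real \<Rightarrow> ('a::metric_space \<Rightarrow> 'a) \<Rightarrow> bool" where
  "firmly_vicinal \<kappa> T \<longleftrightarrow>
     (\<forall>x y. let Cx = cos (sqrt \<kappa> * dist (T x) x); Cy = cos (sqrt \<kappa> * dist (T y) y) in
        (Cx\<^sup>2 * (1 + Cy\<^sup>2) * Cy + Cy\<^sup>2 * (1 + Cx\<^sup>2) * Cx) * cos (sqrt \<kappa> * dist (T x) (T y))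
        \<ge> Cx\<^sup>2 * (1 + Cy\<^sup>2) * cos (sqrt \<kappa> * dist (T x) y)
          + Cy\<^sup>2 * (1 + Cx\<^sup>2) * cos (sqrt \<kappa> * dist (T y) x))"

definition Fix :: "('a \<Rightarrow> 'a) \<Rightarrow> 'a set" where
  "Fix T = {x. T x = x}"

definition asym_rad :: "(nat \<Rightarrow> 'a::metric_space) \<Rightarrow> 'a \<Rightarrow> ereal" where
  "asym_rad x z = limsup (\<lambda>n. ereal (dist (x n) z))"

definition Delta_convergent :: "(nat \<Rightarrow> 'a::metric_space) \<Rightarrow> 'a \<Rightarrow> bool" where
  "Delta_convergent x p \<longleftrightarrow>
     (\<forall>r::nat \<Rightarrow> nat. strict_mono r \<longrightarrow>
        (\<forall>z. z \<noteq> p \<longrightarrow> asym_rad (x \<circ> r) p < asym_rad (x \<circ> r) z))"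

end

theory Submission
  imports Defs
begin


definition rad :: "(nat \<Rightarrow> 'a::metric_space) \<Rightarrow> 'a \<Rightarrow> real" where
  "rad y z = real_of_ereal (asym_rad y z)"

lemma asym_rad_bounds:
  assumes "\<And>n. dist (y n) z \<le> B"
  shows "0 \<le> asym_rad y z" "asym_rad y z \<le> ereal B"
proof -
  show "0 \<le> asym_rad y z" unfolding asym_rad_def
    by (rule le_Limsup) auto
  show "asym_rad y z \<le> ereal B" unfolding asym_rad_def
    by (rule Limsup_bounded) (use assms in auto)
qed

lemma asym_rad_eq:
  assumes "\<And>n. dist (y n) z \<le> B"
  shows "asym_rad y z = ereal (rad y z)" "0 \<le> rad y z" "rad y z \<le> B"
proof -
  note b = asym_rad_bounds[of y z B, OF assms]
  then show "asym_rad y z = ereal (rad y z)" unfolding rad_def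
    by (cases "asym_rad y z") auto
  with b show "0 \<le> rad y z" "rad y z \<le> B" by auto
qed

lemma rad_le:
  assumes "\<And>n. dist (y n) z \<le> B" "eventually (\<lambda>n. dist (y n) z \<le> a) sequentially"
  shows "rad y z \<le> a"
proof -
  have "asym_rad y z \<le> ereal a" unfolding asym_rad_def
    by (rule Limsup_bounded) (use assms(2) in auto)
  then show ?thesis using asym_rad_eq[of y z B, OF assms(1)] by auto
qed

lemma rad_ev:
  assumes "\<And>n. dist (y n) z \<le> B" "e > 0"
  shows "eventually (\<lambda>n. dist (y n) z < rad y z + e) sequentially"
proof -
  have "asym_rad y z < ereal (rad y z + e)" using asym_rad_eq[of y z B, OF assms(1)] assms(2) by auto
  from Limsup_lessD[OF this[unfolded asym_rad_def]] show ?thesis by auto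
qed

lemma rad_lim:
  assumes "\<And>n. dist (y n) z \<le> B" "(\<lambda>n. dist (y n) z) \<longlonglongrightarrow> L"
  shows "rad y z = L"
proof -
  have "(\<lambda>n. ereal (dist (y n) z)) \<longlonglongrightarrow> ereal L" using assms(2) by auto
  from lim_imp_Limsup[OF _ this] have "asym_rad y z = ereal L" unfolding asym_rad_def by simp
  then show ?thesis using asym_rad_eq[of y z B, OF assms(1)] by auto
qed



lemma dot_rot:
  fixes P W :: "real^3"
  assumes "P \<bullet> P = 1" "W \<bullet> W = 1" "P \<bullet> W = 0"
  shows "(cos a *\<^sub>R P + sin a *\<^sub>R W) \<bullet> (cos b *\<^sub>R P + sin b *\<^sub>R W) = cos (a - b)"
proof -
  have "W \<bullet> P = 0" using assms(3) by (simp add: inner_commute)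
  then show ?thesis using assms
    by (simp add: inner_add_left inner_add_right cos_diff algebra_simps)
qed

lemma arccos_cos_abs:
  assumes "\<bar>x\<bar> \<le> pi" shows "arccos (cos x) = \<bar>x\<bar>"
proof (cases "x \<ge> 0")
  case True then show ?thesis using assms by (simp add: arccos_cos)
next
  case False
  have "cos x = cos (-x)" by simp
  moreover have "arccos (cos (-x)) = -x" using assms False by (intro arccos_cos) auto
  ultimately show ?thesis using False by simp
qed

lemma G1:
  fixes P W :: "real^3"
  assumes k: "\<kappa> > 0" and PW: "P \<bullet> P = 1" "W \<bullet> W = 1" "P \<bullet> W = 0"
    and th: "0 \<le> \<theta>" "\<theta> \<le> pi"
  shows "rho \<kappa> P (cos \<theta> *\<^sub>R P + sin \<theta> *\<^sub>R W) = \<theta> / sqrt \<kappa>"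
    "is_geodesic (rho \<kappa>) S2 (\<lambda>t. cos (sqrt \<kappa> * t) *\<^sub>R P + sin (sqrt \<kappa> * t) *\<^sub>R W) P (cos \<theta> *\<^sub>R P + sin \<theta> *\<^sub>R W)"
proof -
  define g where "g = (\<lambda>t. cos (sqrt \<kappa> * t) *\<^sub>R P + sin (sqrt \<kappa> * t) *\<^sub>R W)"
  have s: "sqrt \<kappa> > 0" using k by simp
  have dg: "g a \<bullet> g b = cos (sqrt \<kappa> * a - sqrt \<kappa> * b)" for a b
    unfolding g_def by (rule dot_rot[OF PW])
  have g0: "g 0 = P" unfolding g_def by simp
  have "P = cos 0 *\<^sub>R P + sin 0 *\<^sub>R W" by simp
  have "P \<bullet> (cos \<theta> *\<^sub>R P + sin \<theta> *\<^sub>R W) = cos (0 - \<theta>)"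
    using dot_rot[OF PW, of 0 \<theta>] by simp
  then have rPQ: "rho \<kappa> P (cos \<theta> *\<^sub>R P + sin \<theta> *\<^sub>R W) = \<theta> / sqrt \<kappa>"
    unfolding rho_def using th by (simp add: arccos_cos)
  then show "rho \<kappa> P (cos \<theta> *\<^sub>R P + sin \<theta> *\<^sub>R W) = \<theta> / sqrt \<kappa>" .
  have gend: "g (\<theta> / sqrt \<kappa>) = cos \<theta> *\<^sub>R P + sin \<theta> *\<^sub>R W" unfolding g_def using s by simp
  have inS: "g t \<in> S2" for t
  proof -
    have "g t \<bullet> g t = 1" using dg[of t t] by simp
    then show ?thesis unfolding S2_def by (simp add: norm_eq_1)
  qed
  have iso: "rho \<kappa> (g a) (g b) = \<bar>a - b\<bar>" if "a \<in> {0..\<theta>/sqrt \<kappa>}" "b \<in> {0..\<theta>/sqrt \<kappa>}" for a b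
  proof -
    have "\<bar>a - b\<bar> \<le> \<theta> / sqrt \<kappa>" using that by auto
    then have "sqrt \<kappa> * \<bar>a - b\<bar> \<le> \<theta>" using s by (simp add: field_simps)
    then have h: "\<bar>sqrt \<kappa> * a - sqrt \<kappa> * b\<bar> \<le> pi" using th s
      by (simp add: abs_mult right_diff_distrib[symmetric])
    have "rho \<kappa> (g a) (g b) = \<bar>sqrt \<kappa> * a - sqrt \<kappa> * b\<bar> / sqrt \<kappa>"
      unfolding rho_def dg using arccos_cos_abs[OF h] by simp
    also have "\<dots> = \<bar>a - b\<bar>" using s
      by (simp add: right_diff_distrib[symmetric] abs_mult)
    finally show ?thesis .
  qed
  show "is_geodesic (rho \<kappa>) S2 (\<lambda>t. cos (sqrt \<kappa> * t) *\<^sub>R P + sin (sqrt \<kappa> * t) *\<^sub>R W) P (cos \<theta> *\<^sub>R P + sin \<theta> *\<^sub>R W)"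
    unfolding is_geodesic_def g_def[symmetric] rPQ using g0 gend inS iso by auto
qed



lemma G2:
  fixes P Q :: "real^3"
  assumes k: "\<kappa> > 0" and PQ: "P \<bullet> P = 1" "Q \<bullet> Q = 1" "P \<bullet> Q = cos \<theta>"
    and th: "0 \<le> \<theta>" "\<theta> < pi"
  shows "rho \<kappa> P Q = \<theta> / sqrt \<kappa>" "\<exists>g. is_geodesic (rho \<kappa>) S2 g P Q"
proof -
  have r: "rho \<kappa> P Q = \<theta> / sqrt \<kappa>" unfolding rho_def PQ(3) using th by (simp add: arccos_cos)
  then show "rho \<kappa> P Q = \<theta> / sqrt \<kappa>" .
  show "\<exists>g. is_geodesic (rho \<kappa>) S2 g P Q"
  proof (cases "\<theta> = 0")
    case True
    then have "(P - Q) \<bullet> (P - Q) = 0" using PQ by (simp add: inner_diff_left inner_diff_right inner_commute)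
    then have PQe: "P = Q" by simp
    have "P \<in> S2" unfolding S2_def using PQ by (simp add: norm_eq_1)
    then have "is_geodesic (rho \<kappa>) S2 (\<lambda>t. P) P Q"
      unfolding is_geodesic_def r using True PQe by (simp add: rho_def PQ)
    then show ?thesis by blast
  next
    case False
    then have sp: "sin \<theta> > 0" using th by (intro sin_gt_zero) auto
    define W where "W = (1 / sin \<theta>) *\<^sub>R (Q - cos \<theta> *\<^sub>R P)"
    have QP: "Q \<bullet> P = cos \<theta>" using PQ(3) by (simp only: inner_commute)
    have PW: "P \<bullet> W = 0" unfolding W_def using PQ by (simp add: inner_diff_right)
    have d: "(Q - cos \<theta> *\<^sub>R P) \<bullet> (Q - cos \<theta> *\<^sub>R P) = (sin \<theta>)\<^sup>2"
    proof -
      have "(Q - cos \<theta> *\<^sub>R P) \<bullet> (Q - cos \<theta> *\<^sub>R P) = 1 - (cos \<theta>)\<^sup>2"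
        using PQ QP by (simp add: inner_diff_left inner_diff_right power2_eq_square)
      then show ?thesis by (simp add: sin_squared_eq)
    qed
    have WW: "W \<bullet> W = 1" unfolding W_def using d sp by (simp add: power2_eq_square)
    have QW: "Q = cos \<theta> *\<^sub>R P + sin \<theta> *\<^sub>R W" unfolding W_def using sp by simp
    show ?thesis using G1(2)[OF k PQ(1) WW PW th(1)] th(2) QW by auto
  qed
qed

lemma kexist:
  fixes a b c :: real
  assumes "0 \<le> a" "a < pi/2" "0 \<le> c" "c < pi/2" "\<bar>a - c\<bar> \<le> b" "b \<le> a + c"
  shows "\<exists>k. \<bar>k\<bar> \<le> 1 \<and> sin a * sin c * k = cos b - cos a * cos c"
proof (cases "a = 0 \<or> c = 0")
  case True
  then have "b = (if a = 0 then c else a)" using assms by auto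
  then show ?thesis using True by (intro exI[of _ 0]) auto
next
  case False
  have sa: "sin a > 0" "sin c > 0" using False assms by (auto intro!: sin_gt_zero)
  define k where "k = (cos b - cos a * cos c) / (sin a * sin c)"
  have b0: "0 \<le> b" using assms by linarith
  have "cos b \<le> cos \<bar>a - c\<bar>"
    by (rule cos_monotone_0_pi_le) (use assms b0 in linarith)+
  also have "cos \<bar>a - c\<bar> = cos (a - c)" by (cases "a \<ge> c") (simp_all add: abs_real_def cos_diff mult.commute)
  finally have u: "cos b \<le> cos a * cos c + sin a * sin c" by (simp add: cos_diff)
  have "cos (a + c) \<le> cos b"
    by (rule cos_monotone_0_pi_le) (use assms b0 in linarith)+
  then have l: "cos a * cos c - sin a * sin c \<le> cos b" by (simp add: cos_add)
  have p: "sin a * sin c > 0" using sa by simp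
  have "k \<le> 1" unfolding k_def using u p by (simp add: divide_le_eq)
  moreover have "-1 \<le> k" unfolding k_def using l p by (simp add: le_divide_eq)
  ultimately have "\<bar>k\<bar> \<le> 1" by simp
  moreover have "sin a * sin c * k = cos b - cos a * cos c" unfolding k_def using sa by (intro times_divide_eq_right[THEN trans] nonzero_mult_div_cancel_left) simp
  ultimately show ?thesis by blast
qed



definition e1 :: "real^3" where "e1 = axis 1 1"
definition e2 :: "real^3" where "e2 = axis 2 1"
definition e3 :: "real^3" where "e3 = axis 3 1"

lemma e_inner [simp]:
  "e1 \<bullet> e1 = 1" "e2 \<bullet> e2 = 1" "e3 \<bullet> e3 = 1"
  "e1 \<bullet> e2 = 0" "e2 \<bullet> e1 = 0" "e1 \<bullet> e3 = 0" "e3 \<bullet> e1 = 0" "e2 \<bullet> e3 = 0" "e3 \<bullet> e2 = 0"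
  by (simp_all add: e1_def e2_def e3_def inner_axis_axis)

lemma sph:
  fixes a b c k :: real
  assumes k: "\<bar>k\<bar> \<le> 1" "sin a * sin c * k = cos b - cos a * cos c"
  defines "v' \<equiv> cos a *\<^sub>R e1 + sin a *\<^sub>R e2"
    and "y' \<equiv> cos c *\<^sub>R e1 + (sin c * k) *\<^sub>R e2 + (sin c * sqrt (1 - k\<^sup>2)) *\<^sub>R e3"
    and "m' \<equiv> cos (a/2) *\<^sub>R e1 + sin (a/2) *\<^sub>R e2"
  shows "v' \<bullet> v' = 1" "y' \<bullet> y' = 1" "e1 \<bullet> v' = cos a" "v' \<bullet> y' = cos b" "y' \<bullet> e1 = cos c"
    "2 * cos (a/2) * (m' \<bullet> y') = cos c + cos b"
proof -
  show "v' \<bullet> v' = 1" unfolding v'_def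
    by (simp add: inner_add_left inner_add_right power2_eq_square[symmetric])
  have kk: "(sqrt (1 - k\<^sup>2))\<^sup>2 = 1 - k\<^sup>2" using k(1) by (simp add: abs_square_le_1)
  have "y' \<bullet> y' = (cos c)\<^sup>2 + (sin c)\<^sup>2 * (k\<^sup>2 + (sqrt (1 - k\<^sup>2))\<^sup>2)" unfolding y'_def
    by (simp add: inner_add_left inner_add_right power2_eq_square algebra_simps)
  also have "\<dots> = 1" unfolding kk by simp
  finally show "y' \<bullet> y' = 1" .
  show "e1 \<bullet> v' = cos a" unfolding v'_def by (simp add: inner_add_right)
  show "v' \<bullet> y' = cos b" unfolding v'_def y'_def using k(2)
    by (simp add: inner_add_left inner_add_right algebra_simps)
  show "y' \<bullet> e1 = cos c" unfolding y'_def by (simp add: inner_add_left)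
  have my: "m' \<bullet> y' = cos (a/2) * cos c + sin (a/2) * (sin c * k)" unfolding m'_def y'_def
    by (simp add: inner_add_left inner_add_right)
  have ca: "cos a = 2 * (cos (a/2))\<^sup>2 - 1" using cos_double_cos[of "a/2"] by simp
  have sa: "sin a = 2 * sin (a/2) * cos (a/2)" using sin_double[of "a/2"] by simp
  have "2 * cos (a/2) * (m' \<bullet> y') = (1 + cos a) * cos c + sin a * sin c * k"
    unfolding my ca sa by (simp add: algebra_simps power2_eq_square)
  also have "\<dots> = cos c + cos b" using k(2) by (simp add: algebra_simps)
  finally show "2 * cos (a/2) * (m' \<bullet> y') = cos c + cos b" .
qed



lemma CAT_use:
  fixes p q r :: "'a::metric_space"
  assumes "CAT \<kappa> (UNIV :: 'a::metric_space set)"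
    and "dist p q + dist q r + dist r p < 2 * Dk \<kappa>"
    and "is_geodesic dist UNIV \<gamma>1 p q" "is_geodesic dist UNIV \<gamma>2 q r" "is_geodesic dist UNIV \<gamma>3 r p"
    and "p' \<in> S2" "q' \<in> S2" "r' \<in> S2"
    and "rho \<kappa> p' q' = dist p q" "rho \<kappa> q' r' = dist q r" "rho \<kappa> r' p' = dist r p"
    and "is_geodesic (rho \<kappa>) S2 \<delta>1 p' q'" "is_geodesic (rho \<kappa>) S2 \<delta>2 q' r'" "is_geodesic (rho \<kappa>) S2 \<delta>3 r' p'"
    and "t \<in> {0..dist p q}"
  shows "dist (\<gamma>1 t) (\<gamma>3 0) \<le> rho \<kappa> (\<delta>1 t) (\<delta>3 0)"
proof -
  have "(\<gamma>1 t, \<delta>1 t) \<in> (\<lambda>t. (\<gamma>1 t, \<delta>1 t)) ` {0..dist p q}" using assms(15) by blast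
  moreover have "(\<gamma>3 0, \<delta>3 0) \<in> (\<lambda>t. (\<gamma>3 t, \<delta>3 t)) ` {0..dist r p}" by auto
  moreover note C = assms(1)[unfolded CAT_def, THEN conjunct2, THEN conjunct2, rule_format,
      of p q r \<gamma>1 \<gamma>2 \<gamma>3 p' q' r' \<delta>1 \<delta>2 \<delta>3]
  ultimately show ?thesis using assms(2-14) unfolding Let_def by (force simp del: atLeastAtMost_iff)
qed

lemma median:
  fixes u v :: "'a::metric_space"
  assumes k: "\<kappa> > 0" and cat: "CAT \<kappa> (UNIV :: 'a set)"
    and diam: "\<forall>v v' :: 'a. dist v v' < Dk \<kappa> / 2"
  shows "\<exists>m. \<forall>y. cos (sqrt \<kappa> * dist y u) + cos (sqrt \<kappa> * dist y v)
                \<le> 2 * cos (sqrt \<kappa> * dist u v / 2) * cos (sqrt \<kappa> * dist y m)"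
proof -
  define s where "s = sqrt \<kappa>"
  have s: "s > 0" unfolding s_def using k by simp
  have Dk: "Dk \<kappa> = pi / s" unfolding Dk_def s_def ..
  have Dkp: "Dk \<kappa> > 0" unfolding Dk using s by simp
  have sd: "0 \<le> s * dist x z" "s * dist x z < pi / 2" for x z :: 'a
  proof -
    show "0 \<le> s * dist x z" using s by simp
    have "dist x z < pi / s / 2" using diam Dk by metis
    then show "s * dist x z < pi / 2" using s by (simp add: field_simps)
  qed
  have geo: "\<exists>g. is_geodesic dist UNIV g x z" for x z :: 'a
  proof -
    have "Dk \<kappa> > 0" unfolding Dk using s by simp
    then have "dist x z < Dk \<kappa>" using diam[rule_format, of x z] by linarith
    moreover have "D_geodesic (Dk \<kappa>) (UNIV :: 'a set)" using cat unfolding CAT_def by blast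
    ultimately show ?thesis unfolding D_geodesic_def by blast
  qed
  obtain g1 where g1: "is_geodesic dist UNIV g1 u v" using geo[of u v] by blast
  define m where "m = g1 (dist u v / 2)"
  have "cos (s * dist y u) + cos (s * dist y v) \<le> 2 * cos (s * dist u v / 2) * cos (s * dist y m)" for y
  proof -
    obtain g2 where g2: "is_geodesic dist UNIV g2 v y" using geo[of v y] by blast
    obtain g3 where g3: "is_geodesic dist UNIV g3 y u" using geo[of y u] by blast
    define a where "a = s * dist u v"
    define b where "b = s * dist v y"
    define c where "c = s * dist y u"
    have abc: "0 \<le> a" "a < pi/2" "0 \<le> c" "c < pi/2" "0 \<le> b" "b < pi/2"
      unfolding a_def b_def c_def using sd by auto
    have tri: "\<bar>a - c\<bar> \<le> b" "b \<le> a + c"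
    proof -
      have "dist u v \<le> dist u y + dist y v" "dist y u \<le> dist y v + dist v u"
        "dist v y \<le> dist v u + dist u y" by (rule dist_triangle)+
      then have "\<bar>dist u v - dist y u\<bar> \<le> dist v y" "dist v y \<le> dist u v + dist y u"
        by (auto simp: dist_commute)
      then have "s * \<bar>dist u v - dist y u\<bar> \<le> s * dist v y" "s * dist v y \<le> s * (dist u v + dist y u)"
        using s by (auto intro: mult_left_mono)
      then show "\<bar>a - c\<bar> \<le> b" "b \<le> a + c" unfolding a_def b_def c_def using s
        by (auto simp: abs_mult right_diff_distrib[symmetric] distrib_left)
    qed
    obtain kk where kk: "\<bar>kk\<bar> \<le> 1" "sin a * sin c * kk = cos b - cos a * cos c"
      using kexist[OF abc(1-4) tri] by blast
    define v' where "v' = cos a *\<^sub>R e1 + sin a *\<^sub>R e2"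
    define y' where "y' = cos c *\<^sub>R e1 + (sin c * kk) *\<^sub>R e2 + (sin c * sqrt (1 - kk\<^sup>2)) *\<^sub>R e3"
    define m' where "m' = cos (a/2) *\<^sub>R e1 + sin (a/2) *\<^sub>R e2"
    note sp = sph[OF kk, folded v'_def y'_def m'_def]
    have G1a: "rho \<kappa> e1 v' = a / s" "is_geodesic (rho \<kappa>) S2 (\<lambda>t. cos (s * t) *\<^sub>R e1 + sin (s * t) *\<^sub>R e2) e1 v'"
      using G1[OF k, of e1 e2 a] abc unfolding v'_def s_def by auto
    have yy: "y' \<bullet> y' = 1" and vv: "v' \<bullet> v' = 1" using sp by auto
    obtain d2 where d2: "is_geodesic (rho \<kappa>) S2 d2 v' y'" and r2: "rho \<kappa> v' y' = b / s"
      using G2[OF k vv yy sp(4)] abc unfolding s_def by auto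
    obtain d3 where d3: "is_geodesic (rho \<kappa>) S2 d3 y' e1" and r3: "rho \<kappa> y' e1 = c / s"
      using G2[OF k yy _ sp(5)] abc unfolding s_def by auto
    have S: "e1 \<in> S2" "v' \<in> S2" "y' \<in> S2" unfolding S2_def using yy vv by (auto simp: norm_eq_1)
    have per: "dist u v + dist v y + dist y u < 2 * Dk \<kappa>"
      using diam[rule_format, of u v] diam[rule_format, of v y] diam[rule_format, of y u] Dkp by linarith
    have eqs: "rho \<kappa> e1 v' = dist u v" "rho \<kappa> v' y' = dist v y" "rho \<kappa> y' e1 = dist y u"
      using G1a(1) r2 r3 s unfolding a_def b_def c_def by auto
    have t: "dist u v / 2 \<in> {0..dist u v}" by auto
    have main: "dist (g1 (dist u v / 2)) (g3 0) \<le> rho \<kappa> ((\<lambda>t. cos (s * t) *\<^sub>R e1 + sin (s * t) *\<^sub>R e2) (dist u v / 2)) (d3 0)"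
      by (rule CAT_use[OF cat per g1 g2 g3 S eqs G1a(2) d2 d3 t])
    have g30: "g3 0 = y" and d30: "d3 0 = y'" using g3 d3 unfolding is_geodesic_def by auto
    have "s * (dist u v / 2) = a / 2" unfolding a_def by simp
    then have "(\<lambda>t. cos (s * t) *\<^sub>R e1 + sin (s * t) *\<^sub>R e2) (dist u v / 2) = m'" unfolding m'_def by simp
    with main g30 d30 have md: "dist m y \<le> arccos (m' \<bullet> y') / s" unfolding m_def rho_def s_def by simp
    have mm: "m' \<bullet> m' = 1" unfolding m'_def
      by (simp add: inner_add_left inner_add_right power2_eq_square[symmetric])
    have "\<bar>m' \<bullet> y'\<bar> \<le> norm m' * norm y'" by (rule Cauchy_Schwarz_ineq2)
    also have "\<dots> = 1" using mm yy by (simp add: norm_eq_sqrt_inner)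
    finally have w1: "-1 \<le> m' \<bullet> y'" "m' \<bullet> y' \<le> 1" by auto
    have "s * dist m y \<le> arccos (m' \<bullet> y')" using md s by (simp add: field_simps)
    then have "cos (arccos (m' \<bullet> y')) \<le> cos (s * dist m y)"
      using sd[of m y] w1 by (intro cos_monotone_0_pi_le) (auto intro: arccos_ubound)
    then have w: "m' \<bullet> y' \<le> cos (s * dist y m)" using w1 by (simp add: cos_arccos dist_commute)
    have ca: "0 \<le> cos (a/2)" using abc by (intro cos_ge_zero) auto
    have "cos (s * dist y u) + cos (s * dist y v) = 2 * cos (a/2) * (m' \<bullet> y')"
      using sp(6) unfolding c_def b_def by (simp add: dist_commute)
    also have "\<dots> \<le> 2 * cos (a/2) * cos (s * dist y m)" using ca w by (simp add: mult_left_mono)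
    finally show ?thesis unfolding a_def by simp
  qed
  then show ?thesis unfolding s_def by blast
qed



lemma cos_lip: "\<bar>cos x - cos y\<bar> \<le> \<bar>x - y\<bar>" for x y :: real
proof -
  have "\<bar>cos x - cos y\<bar> = 2 * \<bar>sin ((x + y) / 2)\<bar> * \<bar>sin ((y - x) / 2)\<bar>"
    unfolding cos_diff_cos by (simp add: abs_mult)
  also have "\<dots> \<le> 2 * 1 * \<bar>(y - x) / 2\<bar>"
    by (intro mult_mono abs_sin_x_le_abs_x) auto
  finally show ?thesis by simp
qed

lemma ineq:
  fixes a C b e f g h :: real
  assumes a: "1/2 \<le> a" "a \<le> 1" and C: "0 < C" "C \<le> 1" and b: "0 \<le> b" and f: "0 \<le> f"
    and bf: "b \<le> f + h" and eg: "g - h \<le> e" and h: "0 \<le> h"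
    and V: "(a^2*(1+C^2)*C + C^2*(1+a^2)*a)*b \<ge> a^2*(1+C^2)*e + C^2*(1+a^2)*f"
  shows "g - 10*h \<le> f"
proof -
  define P where "P = a^2*(1+C^2)"
  define Q where "Q = C^2*(1+a^2)"
  have P0: "P \<ge> 0" unfolding P_def by simp
  have Q0: "Q \<ge> 0" unfolding Q_def by simp
  have h1: "P*(C*b - e) + Q*(a*b - f) \<ge> 0"
  proof -
    have "P*(C*b - e) + Q*(a*b - f) = (a^2*(1+C^2)*C + C^2*(1+a^2)*a)*b - (a^2*(1+C^2)*e + C^2*(1+a^2)*f)"
      unfolding P_def Q_def by (simp add: algebra_simps)
    then show ?thesis using V by simp
  qed
  have "a * b \<le> b" using a b by (simp add: mult_left_le_one_le)
  then have h2: "a*b - f \<le> h" using bf by simp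
  have "Q*(a*b - f) \<le> Q * h" using h2 Q0 by (rule mult_left_mono)
  moreover have "Q \<le> 2*(1+C^2)"
  proof -
    have "C^2 \<le> 1" using C by (simp add: power_le_one)
    moreover have "a^2 \<le> 1" using a by (simp add: power_le_one)
    ultimately have "C^2*(1+a^2) \<le> 1 * 2" by (intro mult_mono) auto
    moreover have "0 \<le> C^2" by simp
    ultimately have "C^2*(1+a^2) \<le> 2 + 2*C^2" by linarith
    then show ?thesis unfolding Q_def by (simp add: distrib_left)
  qed
  then have "Q * h \<le> 2*(1+C^2) * h" using h by (rule mult_right_mono)
  ultimately have h3: "Q*(a*b - f) \<le> 2*(1+C^2)*h" by simp
  have "C*b \<le> C*(f+h)" using bf C by (simp add: mult_left_mono)
  moreover have "C*h \<le> h" using C h by (simp add: mult_left_le_one_le)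
  ultimately have h4: "C*b - e \<le> C*f - g + 2*h" using eg by (simp add: algebra_simps)
  have h5: "P*(C*b - e) \<le> P*(C*f - g + 2*h)" using h4 P0 by (rule mult_left_mono)
  have "0 \<le> P*(C*f - g + 2*h) + 2*(1+C^2)*h" using h1 h3 h5 by simp
  also have "\<dots> = (1+C^2) * (a^2*(C*f - g + 2*h) + 2*h)" unfolding P_def by (simp add: algebra_simps)
  finally have h6': "0 \<le> (1+C^2) * (a^2*(C*f - g + 2*h) + 2*h)" .
  have "0 < 1 + C^2" by (simp add: add_pos_nonneg)
  then have h6: "0 \<le> a^2*(C*f - g + 2*h) + 2*h" using h6' by (simp add: zero_le_mult_iff)
  define X where "X = C*f - g + 2*h"
  have "X \<ge> -8*h"
  proof (cases "X \<ge> 0")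
    case True then show ?thesis using h by simp
  next
    case False
    have "(1/2)*(1/2) \<le> a*a" using a by (intro mult_mono) auto
    then have "1/4 \<le> a^2" by (simp add: power2_eq_square)
    then have "a^2 * X \<le> 1/4 * X" using False by (intro mult_right_mono_neg) auto
    then show ?thesis using h6 unfolding X_def by simp
  qed
  moreover have "C*f \<le> f" using C f by (simp add: mult_left_le_one_le)
  ultimately show ?thesis unfolding X_def by simp
qed

lemma le_eps:
  fixes A x :: real
  assumes "\<And>e. e > 0 \<Longrightarrow> A - e \<le> (x::real)" shows "A \<le> x"
proof (rule field_le_epsilon)
  fix e :: real assume "0 < e"
  from assms[OF this] show "A \<le> x + e" by simp
qed

context
  fixes \<kappa> :: real
  assumes k: "\<kappa> > 0"
    and diam: "\<forall>v v' :: 'a::complete_space. dist v v' < Dk \<kappa> / 2"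
begin

definition "B = Dk \<kappa> / 2"
definition "s = sqrt \<kappa>"
definition "cs t = cos (s * t)"

lemma s_pos: "s > 0" unfolding s_def using k by simp

lemma B_eq: "s * B = pi / 2" unfolding B_def Dk_def s_def using k by simp

lemma B_pos: "B > 0" unfolding B_def Dk_def using k by simp

lemma sB: "0 \<le> t \<Longrightarrow> t \<le> B \<Longrightarrow> 0 \<le> s * t \<and> s * t \<le> pi / 2"
  using mult_left_mono[of t B s] s_pos B_eq by simp

lemma sB': "0 \<le> t \<Longrightarrow> t < B \<Longrightarrow> s * t < pi / 2"
  using mult_strict_left_mono[of t B s] s_pos B_eq by simp

lemma dB: "dist (x::'a) z < B" unfolding B_def using diam by blast

lemma cs_pos: "0 \<le> t \<Longrightarrow> t < B \<Longrightarrow> cs t > 0"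
proof -
  assume "0 \<le> t" "t < B"
  then have "0 \<le> s * t" "s * t < pi / 2" using sB' s_pos by auto
  then show "cs t > 0" unfolding cs_def by (intro cos_gt_zero_pi) auto
qed

lemma cs_nonneg: "0 \<le> t \<Longrightarrow> t \<le> B \<Longrightarrow> cs t \<ge> 0"
proof -
  assume "0 \<le> t" "t \<le> B"
  then have "0 \<le> s * t" "s * t \<le> pi / 2" using sB by auto
  then show "cs t \<ge> 0" unfolding cs_def by (intro cos_ge_zero) auto
qed

lemma cs_le_iff: "0 \<le> t1 \<Longrightarrow> t1 \<le> B \<Longrightarrow> 0 \<le> t2 \<Longrightarrow> t2 \<le> B \<Longrightarrow> cs t1 \<le> cs t2 \<longleftrightarrow> t2 \<le> t1"
proof -
  assume a: "0 \<le> t1" "t1 \<le> B" "0 \<le> t2" "t2 \<le> B"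
  have "s * t1 \<le> pi" "s * t2 \<le> pi" using a sB[of t1] sB[of t2] pi_gt_zero by auto
  then have "cs t1 \<le> cs t2 \<longleftrightarrow> s * t2 \<le> s * t1" unfolding cs_def
    using a s_pos by (intro cos_mono_le_eq) auto
  then show ?thesis using s_pos by simp
qed

lemma cs_lip: fixes t1 t2 :: real shows "cs t2 - s * \<bar>t1 - t2\<bar> \<le> cs t1"
  using cos_lip[of "s * t1" "s * t2"] s_pos unfolding cs_def
  by (auto simp: abs_mult right_diff_distrib[symmetric])

lemma rad_props: fixes y :: "nat \<Rightarrow> 'a" shows "0 \<le> rad y z" "rad y z \<le> B" "asym_rad y z = ereal (rad y z)"
  using asym_rad_eq[of y z B] dB less_imp_le by blast+

lemma rad_ev': fixes y :: "nat \<Rightarrow> 'a" shows "e > 0 \<Longrightarrow> eventually (\<lambda>n. dist (y n) z < rad y z + e) sequentially"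
  using rad_ev[of y z B e] dB less_imp_le by blast

lemma rad_le': fixes y :: "nat \<Rightarrow> 'a" shows "eventually (\<lambda>n. dist (y n) z \<le> a) sequentially \<Longrightarrow> rad y z \<le> a"
  using rad_le[of y z B a] dB less_imp_le by blast

lemma rad_lim': fixes y :: "nat \<Rightarrow> 'a" shows "(\<lambda>n. dist (y n) z) \<longlonglongrightarrow> L \<Longrightarrow> rad y z = L"
  using rad_lim[of y z B L] dB less_imp_le by blast

lemma cs_dist_ge: 
  fixes y :: "nat \<Rightarrow> 'a"
  assumes "e > 0"
  shows "eventually (\<lambda>n. cs (dist (y n) u) \<ge> cs (rad y u) - e) sequentially"
proof -
  have "eventually (\<lambda>n. dist (y n) u < rad y u + e / s) sequentially"
    using rad_ev'[of "e / s"] assms s_pos by auto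
  then show ?thesis
  proof eventually_elim
    case (elim n)
    show ?case
    proof (cases "dist (y n) u \<le> rad y u")
      case True
      then show ?thesis using cs_le_iff[of "rad y u" "dist (y n) u"] rad_props[of y u] dB[of "y n" u] assms by auto
    next
      case False
      then have "\<bar>dist (y n) u - rad y u\<bar> \<le> e / s" using elim by auto
      then have "s * \<bar>dist (y n) u - rad y u\<bar> \<le> e" using s_pos by (simp add: field_simps)
      then show ?thesis using cs_lip[of "rad y u" "dist (y n) u"] by linarith
    qed
  qed
qed

lemma transfer:
  fixes y :: "nat \<Rightarrow> 'a"
  assumes K: "K > 0"
    and hyp: "\<And>e. e > 0 \<Longrightarrow> eventually (\<lambda>n. cs (dist (y n) w) \<ge> (cs (dist (y n) u) + cs (dist (y n) v)) / K - e) sequentially"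
  shows "cs (rad y w) \<ge> (cs (rad y u) + cs (rad y v)) / K"
proof (rule le_eps)
  fix e :: real assume e: "e > 0"
  define A where "A = (cs (rad y u) + cs (rad y v)) / K"
  define e1 where "e1 = e / (2 / K + 1)"
  have "2 / K + 1 > 0" using K by (simp add: add_pos_pos)
  then have e1: "e1 > 0" unfolding e1_def using e by simp
  have "2 * e1 / K + e1 = e1 * (2 / K + 1)" using K by (simp add: field_simps)
  also have "\<dots> = e" unfolding e1_def using \<open>2 / K + 1 > 0\<close> by simp
  finally have ee: "A - e = A - 2 * e1 / K - e1" by linarith
  have ev: "eventually (\<lambda>n. cs (dist (y n) w) \<ge> A - e) sequentially"
    using hyp[OF e1] cs_dist_ge[OF e1, of y u] cs_dist_ge[OF e1, of y v]
  proof eventually_elim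
    case (elim n)
    have "(cs (rad y u) - e1 + (cs (rad y v) - e1)) / K \<le> (cs (dist (y n) u) + cs (dist (y n) v)) / K"
      using elim K by (intro divide_right_mono) auto
    moreover have "(cs (rad y u) - e1 + (cs (rad y v) - e1)) / K = A - 2 * e1 / K"
      unfolding A_def using K by (simp add: field_simps)
    ultimately show ?case using elim ee by linarith
  qed
  show "A - e \<le> cs (rad y w)"
  proof (cases "A - e \<le> 0")
    case True
    then show ?thesis using cs_nonneg rad_props by (smt (verit))
  next
    case False
    define a where "a = A - e"
    have a0: "a > 0" using False a_def by simp
    obtain n where "cs (dist (y n) w) \<ge> a" using ev[unfolded a_def[symmetric]] eventually_sequentially by auto
    then have a1: "a \<le> 1" unfolding cs_def by (meson cos_le_one order.trans)
    define t where "t = arccos a / s"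
    have at: "arccos a \<le> pi / 2" using a0 a1 by (intro arccos_le_pi2) auto
    have t0: "0 \<le> t" "t \<le> B" unfolding t_def using arccos_lbound[of a] a0 a1 at B_eq s_pos
      by (auto simp: field_simps)
    have cst: "cs t = a" unfolding t_def cs_def using s_pos a0 a1 by (simp add: cos_arccos)
    have "eventually (\<lambda>n. dist (y n) w \<le> t) sequentially"
      using ev[unfolded a_def[symmetric]]
    proof eventually_elim
      case (elim n)
      then have "cs t \<le> cs (dist (y n) w)" using cst by simp
      then show ?case using cs_le_iff[of t "dist (y n) w"] t0 dB[of "y n" w] by auto
    qed
    then have "rad y w \<le> t" by (rule rad_le')
    then have "cs t \<le> cs (rad y w)" using cs_le_iff[of t "rad y w"] t0 rad_props[of y w] by auto
    then show ?thesis using cst a_def by simp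
  qed
qed

lemma cs_less_iff: "0 \<le> t1 \<Longrightarrow> t1 \<le> B \<Longrightarrow> 0 \<le> t2 \<Longrightarrow> t2 \<le> B \<Longrightarrow> cs t1 < cs t2 \<longleftrightarrow> t2 < t1"
  using cs_le_iff[of t2 t1] by auto

lemma cs_le1: "cs t \<le> 1" unfolding cs_def by simp

lemma cs0: "cs 0 = 1" unfolding cs_def by simp

lemma rad_lip:
  fixes y :: "nat \<Rightarrow> 'a"
  shows "rad y z \<le> rad y w + dist z w"
proof (rule field_le_epsilon)
  fix e :: real assume e: "0 < e"
  have "eventually (\<lambda>n. dist (y n) z \<le> rad y w + dist z w + e) sequentially"
    using rad_ev'[OF e, of y w]
  proof eventually_elim
    case (elim n)
    have "dist (y n) z \<le> dist (y n) w + dist w z" by (rule dist_triangle)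
    then show ?case using elim by (simp add: dist_commute)
  qed
  then show "rad y z \<le> rad y w + dist z w + e" by (rule rad_le')
qed

context
  fixes T :: "'a \<Rightarrow> 'a"
  assumes cat: "CAT \<kappa> (UNIV :: 'a set)" and fv: "firmly_vicinal \<kappa> T"
begin

lemma median_cs:
  fixes u v :: 'a
  shows "\<exists>m. \<forall>y. cs (dist y u) + cs (dist y v) \<le> 2 * cs (dist u v / 2) * cs (dist y m)"
proof -
  obtain m where "\<forall>y. cos (sqrt \<kappa> * dist y u) + cos (sqrt \<kappa> * dist y v)
                \<le> 2 * cos (sqrt \<kappa> * dist u v / 2) * cos (sqrt \<kappa> * dist y m)"
    using median[OF k cat diam] by blast
  then show ?thesis unfolding cs_def s_def by (auto simp: mult.assoc)
qed

lemma median_rad: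
  fixes y :: "nat \<Rightarrow> 'a" and u v :: 'a
  shows "\<exists>m. 2 * cs (dist u v / 2) > 0 \<and>
    cs (rad y m) \<ge> (cs (rad y u) + cs (rad y v)) / (2 * cs (dist u v / 2))"
proof -
  obtain m where m: "\<forall>y. cs (dist y u) + cs (dist y v) \<le> 2 * cs (dist u v / 2) * cs (dist y m)"
    using median_cs by blast
  have K: "2 * cs (dist u v / 2) > 0" using cs_pos[of "dist u v / 2"] dB[of u v] B_pos by auto
  have "cs (rad y m) \<ge> (cs (rad y u) + cs (rad y v)) / (2 * cs (dist u v / 2))"
  proof (rule transfer[OF K])
    fix e :: real assume "e > 0"
    have "(cs (dist (y n) u) + cs (dist (y n) v)) / (2 * cs (dist u v / 2)) \<le> cs (dist (y n) m)" for n
      using m[rule_format, of "y n"] K by (simp add: divide_le_eq mult.commute)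
    then show "eventually (\<lambda>n. cs (dist (y n) m) \<ge> (cs (dist (y n) u) + cs (dist (y n) v)) / (2 * cs (dist u v / 2)) - e) sequentially"
      using \<open>e > 0\<close> by (auto intro!: always_eventually) (smt (verit))
  qed
  with K show ?thesis by blast
qed

lemma unique_center:
  fixes y :: "nat \<Rightarrow> 'a"
  assumes min: "\<forall>z. rad y u \<le> rad y z" and ru: "rad y u < B" and zu: "z \<noteq> u"
  shows "rad y u < rad y z"
proof (rule ccontr)
  assume "\<not> rad y u < rad y z"
  then have zle: "rad y z \<le> rad y u" by simp
  obtain m where K: "2 * cs (dist u z / 2) > 0"
    and m: "cs (rad y m) \<ge> (cs (rad y u) + cs (rad y z)) / (2 * cs (dist u z / 2))"
    using median_rad[where y=y and u=u and v=z] by blast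
  have d: "0 < dist u z / 2" "dist u z / 2 \<le> B" using zu dB[of u z] B_pos by auto
  have c1: "cs (dist u z / 2) < 1" using cs_less_iff[of "dist u z / 2" 0] d B_pos cs0 by auto
  have cu: "cs (rad y u) > 0" using cs_pos[OF rad_props(1) ru] .
  have cz: "cs (rad y z) \<ge> cs (rad y u)" using cs_le_iff[of "rad y u" "rad y z"] zle rad_props by auto
  have "2 * cs (rad y u) / (2 * cs (dist u z / 2)) > cs (rad y u)"
    using K c1 cu by (simp add: less_divide_eq)
  moreover have "(cs (rad y u) + cs (rad y z)) / (2 * cs (dist u z / 2)) \<ge> 2 * cs (rad y u) / (2 * cs (dist u z / 2))"
    using K cz by (intro divide_right_mono) auto
  ultimately have "cs (rad y m) > cs (rad y u)" using m by linarith
  then have "rad y m < rad y u" using cs_less_iff[of "rad y u" "rad y m"] rad_props by auto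
  with min show False by (meson not_le)
qed

lemma exists_center:
  fixes y :: "nat \<Rightarrow> 'a"
  assumes q: "rad y q < B"
  shows "\<exists>u. \<forall>z. rad y u \<le> rad y z"
proof -
  define R where "R = Inf (range (rad y))"
  have bdd: "bdd_below (range (rad y))" unfolding bdd_below_def using rad_props(1)[of y] by blast
  have Rle: "R \<le> rad y z" for z unfolding R_def by (rule cInf_lower) (auto simp: bdd)
  have R0: "0 \<le> R" unfolding R_def by (rule cInf_greatest) (auto simp: rad_props)
  have RB: "R < B" using Rle[of q] q by simp
  have "\<exists>z. rad y z < R + 1 / Suc n" for n
  proof -
    have "R < R + 1 / Suc n" by simp
    then show ?thesis unfolding R_def using cInf_less_iff[of "range (rad y)" "R + 1 / Suc n"] bdd
      unfolding R_def by auto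
  qed
  then obtain zs where zs: "\<And>n. rad y (zs n) < R + 1 / Suc n" by metis
  have cR: "cs R > 0" using cs_pos R0 RB by blast
  have cRle: "cs (rad y w) \<le> cs R" for w using cs_le_iff[of "rad y w" R] Rle[of w] R0 RB rad_props by auto
  have close: "cs (rad y (zs n)) \<ge> cs R - s / Suc N" if "n \<ge> N" for n N
  proof -
    have "1 / real (Suc n) \<le> 1 / Suc N" using that by (simp add: frac_le)
    then have "\<bar>rad y (zs n) - R\<bar> \<le> 1 / Suc N" using zs[of n] Rle[of "zs n"] by auto
    then have "s * \<bar>rad y (zs n) - R\<bar> \<le> s / Suc N" using s_pos
      by (metis mult_left_mono less_imp_le times_divide_eq_right mult_1_right)
    then show ?thesis using cs_lip[of R "rad y (zs n)"] by linarith
  qed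
  have "Cauchy zs"
    unfolding Cauchy_def
  proof (intro allI impI)
    fix e :: real assume e: "e > 0"
    define e' where "e' = min e B"
    have e': "0 < e' / 2" "e' / 2 \<le> B" using e B_pos unfolding e'_def by auto
    have ce: "cs (e' / 2) < 1" using cs_less_iff[of "e' / 2" 0] e' B_pos cs0 by auto
    define d0 where "d0 = (1 - cs (e' / 2)) * cs R / s"
    have "d0 > 0" unfolding d0_def using ce cR s_pos by simp
    then obtain N where N: "inverse (real (Suc N)) < d0" using reals_Archimedean by blast
    define t where "t = s / Suc N"
    have tN: "t < (1 - cs (e' / 2)) * cs R"
      using N s_pos unfolding d0_def t_def by (simp add: field_simps)
    have closeN: "cs (rad y (zs n)) \<ge> cs R - t" if "n \<ge> N" for n
      using close[OF that] unfolding t_def .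
    show "\<exists>M. \<forall>m\<ge>M. \<forall>n\<ge>M. dist (zs m) (zs n) < e"
    proof (intro exI allI impI)
      fix m n assume mn: "N \<le> m" "N \<le> n"
      define dd where "dd = dist (zs m) (zs n)"
      obtain md where K: "2 * cs (dd / 2) > 0"
        and md: "cs (rad y md) \<ge> (cs (rad y (zs m)) + cs (rad y (zs n))) / (2 * cs (dd / 2))"
        using median_rad[where y=y and u="zs m" and v="zs n"] unfolding dd_def by blast
      have "cs (rad y (zs m)) + cs (rad y (zs n)) \<le> 2 * cs (dd / 2) * cs (rad y md)"
        using md K by (simp add: divide_le_eq mult.commute)
      also have "\<dots> \<le> 2 * cs (dd / 2) * cs R" using K cRle[of md] by (intro mult_left_mono) auto
      finally have f1: "cs (rad y (zs m)) + cs (rad y (zs n)) \<le> 2 * cs (dd / 2) * cs R" .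
      have "2 * (cs R - t) \<le> cs (rad y (zs m)) + cs (rad y (zs n))"
        using closeN[OF mn(1)] closeN[OF mn(2)] by (smt (verit))
      then have "2 * (cs R - t) \<le> 2 * cs (dd / 2) * cs R" using f1 by (rule order.trans)
      then have g1: "cs R - t \<le> cs (dd / 2) * cs R" by (simp add: mult.assoc)
      have g2: "t < cs R - cs (e' / 2) * cs R" using tN by (simp add: algebra_simps)
      from g1 g2 have "cs (e' / 2) * cs R < cs (dd / 2) * cs R" by linarith
      then have "cs (e' / 2) < cs (dd / 2)" using cR by (simp add: mult_less_cancel_right)
      then have "dd / 2 < e' / 2" using cs_less_iff[of "e' / 2" "dd / 2"] e' dB[of "zs m" "zs n"] B_pos
        unfolding dd_def by auto
      then show "dist (zs m) (zs n) < e" unfolding dd_def e'_def by auto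
    qed
  qed
  then have "convergent zs" by (rule Cauchy_convergent)
  then obtain z where z: "zs \<longlonglongrightarrow> z" unfolding convergent_def by (elim exE)
  have "rad y z \<le> R"
  proof (rule field_le_epsilon)
    fix e :: real assume e: "0 < e"
    then have "e / 2 > 0" by simp
    then obtain N where N: "inverse (real (Suc N)) < e / 2" using reals_Archimedean by blast
    have "eventually (\<lambda>n. dist (zs n) z < e / 2) sequentially" using tendstoD[OF z \<open>e / 2 > 0\<close>] .
    moreover have "eventually (\<lambda>n. n \<ge> N) sequentially" by (simp add: eventually_ge_at_top)
    ultimately have "eventually (\<lambda>n. dist (zs n) z < e / 2 \<and> n \<ge> N) sequentially" by eventually_elim auto
    then obtain n where n: "dist (zs n) z < e / 2" "n \<ge> N" using eventually_sequentially by auto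
    have "1 / real (Suc n) \<le> 1 / Suc N" using n by (simp add: frac_le)
    then have "rad y (zs n) < R + e / 2" using zs[of n] N by (simp add: inverse_eq_divide)
    moreover have "rad y z \<le> rad y (zs n) + dist z (zs n)" by (rule rad_lip)
    ultimately show "rad y z \<le> R + e" using n by (simp add: dist_commute)
  qed
  then show ?thesis using Rle by (meson order.trans)
qed

lemma dB_le: "dist (x::'a) z \<le> B" using dB less_imp_le by blast

lemma cs_dpos: "cs (dist (x::'a) z) > 0" using cs_pos[of "dist x z"] dB by simp

lemma cs_eq: "cos (sqrt \<kappa> * d) = cs d" unfolding cs_def s_def ..

lemma fv_inst: "let Cx = cs (dist (T x) x); Cy = cs (dist (T y) y) in
        (Cx\<^sup>2 * (1 + Cy\<^sup>2) * Cy + Cy\<^sup>2 * (1 + Cx\<^sup>2) * Cx) * cs (dist (T x) (T y))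
        \<ge> Cx\<^sup>2 * (1 + Cy\<^sup>2) * cs (dist (T x) y)
          + Cy\<^sup>2 * (1 + Cx\<^sup>2) * cs (dist (T y) x)"
  using fv unfolding firmly_vicinal_def cs_eq by blast

lemma fv_fix:
  assumes p: "T p = p"
  shows "cs (dist x p) \<le> cs (dist (T x) x) * cs (dist (T x) p)"
proof -
  define Cx where "Cx = cs (dist (T x) x)"
  define A where "A = cs (dist (T x) p)"
  define D where "D = cs (dist x p)"
  have "(Cx\<^sup>2 * (1 + 1\<^sup>2) * 1 + 1\<^sup>2 * (1 + Cx\<^sup>2) * Cx) * A \<ge> Cx\<^sup>2 * (1 + 1\<^sup>2) * A + 1\<^sup>2 * (1 + Cx\<^sup>2) * D"
    using fv_inst[of x p] p unfolding Let_def Cx_def[symmetric] A_def D_def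
    by (simp add: cs0 dist_commute)
  then have "(1 + Cx\<^sup>2) * D \<le> (1 + Cx\<^sup>2) * (Cx * A)" by (simp add: algebra_simps)
  moreover have "0 < 1 + Cx\<^sup>2" by (simp add: add_pos_nonneg)
  ultimately show ?thesis unfolding D_def Cx_def A_def by simp
qed

lemma fejer:
  assumes p: "T p = p"
  shows "dist (T x) p \<le> dist x p"
proof -
  have "cs (dist x p) \<le> cs (dist (T x) x) * cs (dist (T x) p)" by (rule fv_fix[OF p])
  also have "\<dots> \<le> cs (dist (T x) p)"
    using cs_dpos[of "T x" p] cs_dpos[of "T x" x] cs_le1
    by (intro mult_left_le_one_le) auto
  finally show ?thesis using cs_le_iff[of "dist x p" "dist (T x) p"] dB_le by auto
qed

lemma fejer_n:
  assumes p: "T p = p"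
  shows "dist ((T ^^ n) x) p \<le> dist x p"
proof (induction n)
  case 0 then show ?case by simp
next
  case (Suc n)
  have "dist ((T ^^ Suc n) x) p \<le> dist ((T ^^ n) x) p" using fejer[OF p] by simp
  with Suc show ?case by linarith
qed

lemma asym_reg:
  assumes p: "T p = p" and e: "e > 0"
  shows "eventually (\<lambda>n. dist (T ((T ^^ n) x)) ((T ^^ n) x) < e) sequentially"
proof -
  define d where "d n = dist ((T ^^ n) x) p" for n
  have "decseq d" unfolding d_def by (rule decseq_SucI) (simp add: fejer[OF p])
  then obtain L where L: "d \<longlonglongrightarrow> L" "\<forall>i. L \<le> d i"
    using decseq_convergent[of d 0] unfolding d_def by auto
  have L0: "0 \<le> L" using tendsto_le[OF _ L(1) tendsto_const, of 0] unfolding d_def by auto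
  have LB: "L < B" using L(2)[rule_format, of 0] dB[of x p] unfolding d_def by simp
  have cL: "cs L > 0" using cs_pos L0 LB by blast
  have cd: "(\<lambda>n. cs (d n)) \<longlonglongrightarrow> cs L" unfolding cs_def
    by (intro tendsto_cos tendsto_mult tendsto_const L(1))
  have rat: "(\<lambda>n. cs (d n) / cs (d (Suc n))) \<longlonglongrightarrow> cs L / cs L"
    using cL by (intro tendsto_divide cd LIMSEQ_Suc[OF cd]) auto
  define a where "a n = cs (dist (T ((T ^^ n) x)) ((T ^^ n) x))" for n
  have lo: "cs (d n) / cs (d (Suc n)) \<le> a n" for n
  proof -
    have pos: "cs (d (Suc n)) > 0" unfolding d_def using cs_dpos by simp
    have "cs (d n) \<le> a n * cs (d (Suc n))" unfolding a_def d_def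
      using fv_fix[OF p, of "(T ^^ n) x"] by (simp add: mult.commute)
    then show ?thesis using pos by (simp add: divide_le_eq)
  qed
  have "a \<longlonglongrightarrow> 1"
  proof (rule tendsto_sandwich[of "\<lambda>n. cs (d n) / cs (d (Suc n))" a sequentially "\<lambda>n. 1"])
    show "eventually (\<lambda>n. cs (d n) / cs (d (Suc n)) \<le> a n) sequentially" using lo by simp
    show "eventually (\<lambda>n. a n \<le> 1) sequentially" unfolding a_def using cs_le1 by simp
    show "(\<lambda>n. cs (d n) / cs (d (Suc n))) \<longlonglongrightarrow> 1" using rat cL by simp
  qed simp
  define e' where "e' = min e B"
  have e': "0 < e'" "e' \<le> B" using e B_pos unfolding e'_def by auto
  have ce: "cs e' < 1" using cs_less_iff[of e' 0] e' cs0 by auto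
  have "eventually (\<lambda>n. a n > cs e') sequentially"
    using order_tendstoD(1)[OF \<open>a \<longlonglongrightarrow> 1\<close> ce] .
  then show ?thesis
  proof eventually_elim
    case (elim n)
    then have "dist (T ((T ^^ n) x)) ((T ^^ n) x) < e'" unfolding a_def
      using cs_less_iff[of e' "dist (T ((T ^^ n) x)) ((T ^^ n) x)"] e' dB_le by auto
    then show ?case unfolding e'_def by simp
  qed
qed

lemma cs_dist_lip: "\<bar>cs (dist a c) - cs (dist b c)\<bar> \<le> s * dist (a::'a) b"
proof -
  have "\<bar>cos (s * dist a c) - cos (s * dist b c)\<bar> \<le> \<bar>s * dist a c - s * dist b c\<bar>" by (rule cos_lip)
  also have "\<dots> = s * \<bar>dist a c - dist b c\<bar>" using s_pos by (simp add: abs_mult right_diff_distrib[symmetric])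
  also have "\<dots> \<le> s * dist a b" using s_pos dist_triangle3[of a c b] dist_triangle3[of b c a]
    by (intro mult_left_mono) (auto simp: dist_commute abs_le_iff)
  finally show ?thesis unfolding cs_def .
qed

lemma demi:
  fixes x0 u p :: 'a
  assumes p: "T p = p" and r: "strict_mono r"
    and min: "\<forall>z. rad ((\<lambda>n. (T ^^ n) x0) \<circ> r) u \<le> rad ((\<lambda>n. (T ^^ n) x0) \<circ> r) z"
  shows "T u = u"
proof -
  define y where "y = (\<lambda>n. (T ^^ n) x0) \<circ> r"
  have min': "\<forall>z. rad y u \<le> rad y z" using min unfolding y_def .
  have "rad y p \<le> dist x0 p" unfolding y_def
    by (rule rad_le') (simp add: fejer_n[OF p])
  then have ru: "rad y u < B" using min'[rule_format, of p] dB[of x0 p] by linarith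
  have hyp: "eventually (\<lambda>n. cs (dist (y n) (T u)) \<ge> (cs (dist (y n) u) + cs (dist (y n) u)) / 2 - e) sequentially"
    if e: "e > 0" for e
  proof -
    define e0 where "e0 = min (1 / (2 * s)) (e / (10 * s))"
    have e0: "e0 > 0" unfolding e0_def using e s_pos by simp
    have ev0: "eventually (\<lambda>k. dist (T ((T ^^ k) x0)) ((T ^^ k) x0) < e0) sequentially"
      by (rule asym_reg[OF p e0])
    have "eventually (\<lambda>n. dist (T (y n)) (y n) < e0) sequentially"
      using filterlim_subseq[OF r, unfolded filterlim_iff] ev0 unfolding y_def by auto
    then show ?thesis
    proof eventually_elim
      case (elim n)
      define X where "X = y n"
      define h where "h = s * dist (T X) X"
      have h0: "0 \<le> h" unfolding h_def using s_pos by simp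
      have hs: "h \<le> 1/2" "10 * h \<le> e"
      proof -
        have "h < s * e0" unfolding h_def X_def using elim s_pos by simp
        moreover have "s * e0 \<le> 1/2" "s * e0 \<le> e / 10" unfolding e0_def using s_pos
          by (auto simp: min_def field_simps)
        ultimately show "h \<le> 1/2" "10 * h \<le> e" by linarith+
      qed
      define a where "a = cs (dist (T X) X)"
      define C where "C = cs (dist (T u) u)"
      have "cs 0 - s * \<bar>dist (T X) X - 0\<bar> \<le> cs (dist (T X) X)" by (rule cs_lip)
      then have a: "1/2 \<le> a" "a \<le> 1" unfolding a_def using hs h_def cs0 cs_le1 by auto
      have C: "0 < C" "C \<le> 1" unfolding C_def using cs_dpos cs_le1 by auto
      have l1: "\<bar>cs (dist (T X) (T u)) - cs (dist X (T u))\<bar> \<le> h" unfolding h_def by (rule cs_dist_lip)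
      have l2: "\<bar>cs (dist (T X) u) - cs (dist X u)\<bar> \<le> h" unfolding h_def by (rule cs_dist_lip)
      have V: "(a^2*(1+C^2)*C + C^2*(1+a^2)*a) * cs (dist (T X) (T u))
          \<ge> a^2*(1+C^2) * cs (dist (T X) u) + C^2*(1+a^2) * cs (dist X (T u))"
        using fv_inst[of X u] unfolding Let_def a_def[symmetric] C_def[symmetric] by (simp add: dist_commute)
      have "cs (dist X u) - 10 * h \<le> cs (dist X (T u))"
        by (rule ineq[OF a C _ _ _ _ h0 V]) (use l1 l2 cs_dpos[of "T X" "T u"] cs_dpos[of X "T u"] in \<open>auto simp: abs_le_iff\<close>)
      then show ?case using hs unfolding X_def by simp
    qed
  qed
  have "cs (rad y (T u)) \<ge> (cs (rad y u) + cs (rad y u)) / 2"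
    by (rule transfer[where K=2 and y=y and w="T u" and u=u and v=u, OF _ hyp]) auto
  then have "cs (rad y u) \<le> cs (rad y (T u))" by simp
  then have le: "rad y (T u) \<le> rad y u" using cs_le_iff[of "rad y u" "rad y (T u)"] rad_props by auto
  show "T u = u"
  proof (rule ccontr)
    assume "T u \<noteq> u"
    from unique_center[OF min' ru this] le show False by simp
  qed
qed

lemma radeq:
  fixes x0 q :: 'a
  assumes q: "T q = q" and r: "strict_mono r" and r': "strict_mono r'"
  shows "rad ((\<lambda>n. (T ^^ n) x0) \<circ> r) q = rad ((\<lambda>n. (T ^^ n) x0) \<circ> r') q"
proof -
  define d where "d n = dist ((T ^^ n) x0) q" for n
  have "decseq d" unfolding d_def by (rule decseq_SucI) (simp add: fejer[OF q])
  then obtain L where L: "d \<longlonglongrightarrow> L" using decseq_convergent[of d 0] unfolding d_def by auto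
  have "rad ((\<lambda>n. (T ^^ n) x0) \<circ> rr) q = L" if "strict_mono rr" for rr
    by (rule rad_lim') (use LIMSEQ_subseq_LIMSEQ[OF L that] in \<open>simp add: d_def o_def\<close>)
  then show ?thesis using r r' by simp
qed

lemma main:
  assumes "Fix T \<noteq> {}"
  shows "\<forall>x. \<exists>p\<in>Fix T. Delta_convergent (\<lambda>n. (T ^^ n) x) p"
proof
  fix x0 :: 'a
  obtain p0 where p0: "T p0 = p0" using assms unfolding Fix_def by auto
  define xs where "xs = (\<lambda>n. (T ^^ n) x0)"
  have bnd: "rad (xs \<circ> r) p0 < B" for r
  proof -
    have "rad (xs \<circ> r) p0 \<le> dist x0 p0" unfolding xs_def
      by (rule rad_le') (simp add: fejer_n[OF p0])
    then show ?thesis using dB[of x0 p0] by linarith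
  qed
  have cen: "\<exists>u. T u = u \<and> (\<forall>z. rad (xs \<circ> r) u \<le> rad (xs \<circ> r) z) \<and> rad (xs \<circ> r) u < B"
    if r: "strict_mono r" for r
  proof -
    obtain u where u: "\<forall>z. rad (xs \<circ> r) u \<le> rad (xs \<circ> r) z" using exists_center[OF bnd] by blast
    have "T u = u" using demi[OF p0 r u[unfolded xs_def]] .
    moreover have "rad (xs \<circ> r) u < B" using u[rule_format, of p0] bnd[of r] by linarith
    ultimately show ?thesis using u by blast
  qed
  have sid: "strict_mono (id :: nat \<Rightarrow> nat)" by (simp add: strict_mono_def)
  obtain p where p: "T p = p" "\<forall>z. rad (xs \<circ> id) p \<le> rad (xs \<circ> id) z" "rad (xs \<circ> id) p < B"
    using cen[OF sid] by blast
  have "Delta_convergent xs p"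
    unfolding Delta_convergent_def
  proof (intro allI impI)
    fix r :: "nat \<Rightarrow> nat" and z assume r: "strict_mono r" and zp: "z \<noteq> p"
    obtain u where u: "T u = u" "\<forall>z. rad (xs \<circ> r) u \<le> rad (xs \<circ> r) z" "rad (xs \<circ> r) u < B"
      using cen[OF r] by blast
    have up: "u = p"
    proof (rule ccontr)
      assume "u \<noteq> p"
      then have 1: "rad (xs \<circ> id) p < rad (xs \<circ> id) u" using unique_center[OF p(2) p(3)] by blast
      have 2: "rad (xs \<circ> r) u < rad (xs \<circ> r) p" using unique_center[OF u(2) u(3), of p] \<open>u \<noteq> p\<close> by auto
      have "rad (xs \<circ> id) p = rad (xs \<circ> r) p" unfolding xs_def by (rule radeq[OF p(1) sid r])
      moreover have "rad (xs \<circ> id) u = rad (xs \<circ> r) u" unfolding xs_def by (rule radeq[OF u(1) sid r])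
      ultimately show False using 1 2 by simp
    qed
    have "rad (xs \<circ> r) p < rad (xs \<circ> r) z" using unique_center[OF u(2) u(3) zp[folded up]] up by simp
    then show "asym_rad (xs \<circ> r) p < asym_rad (xs \<circ> r) z" using rad_props(3)[of "xs \<circ> r"] by simp
  qed
  then show "\<exists>p\<in>Fix T. Delta_convergent (\<lambda>n. (T ^^ n) x0) p" using p(1) unfolding xs_def Fix_def by blast
qed

end

end

theorem corollary5p2:
  fixes \<kappa> :: real and T :: "'a::complete_space \<Rightarrow> 'a"
  assumes "\<kappa> > 0"
    and "CAT \<kappa> (UNIV :: 'a set)"
    and "\<forall>v v' :: 'a. dist v v' < Dk \<kappa> / 2"
    and "firmly_vicinal \<kappa> T"
    and "Fix T \<noteq> {}"
  shows "\<forall>x. \<exists>p\<in>Fix T. Delta_convergent (\<lambda>n. (T ^^ n) x) p"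
  using main[OF assms(1) assms(3) assms(2) assms(4) assms(5)] .

end
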